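(* Let $X',X''$ be a disjoint cover of an index set $X$, $\Pi:=\Pi X$, $\Pi':=\Pi X'$, $\Pi'':=\Pi X''$, and let $\preceq\subseteq(\Pi\times\Pi)\cup(\Pi'\times\Pi')\cup(\Pi''\times\Pi'')$ be a smooth (generalized) Hamming relation with associated $\mu$. Then ($\mu$*3) holds: for every $\Sigma\subseteq\Pi$, with $\Sigma'':=\Sigma\upharpoonright X''$, $\mu(\Pi'\times\Sigma'')\upharpoonright X''\subseteq\mu(\Sigma)\upharpoonright X''$. Consequently, for the size notion "$B\subseteq A$ is big iff $\mu(A)\subseteq B\subseteq A$", condition (S*3) holds: for $A\subseteq\Sigma\subseteq\Pi$, if $A$ is big in $\Sigma$ then there is $B$ big in $\Pi'\times\Sigma''$ with $B\upharpoonright X''\subseteq A\upharpoonright X''$.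
   Context: $\Pi X$ is the product of the value sets over the indices in $X$. Elements $\sigma\in\Pi$ are written $\sigma=\sigma'\circ\sigma''$ (concatenation) with $\sigma'=\sigma\upharpoonright X'$, $\sigma''=\sigma\upharpoonright X''$; $\Sigma\upharpoonright Y$ is the set of restrictions. $\preceq$ is a (generalized) Hamming relation iff $\preceq$ is reflexive and for all $\sigma,\tau\in\Pi$: $\sigma\preceq\tau\iff(\sigma'\preceq\tau'$ and $\sigma''\preceq\tau'')$. $x\prec y$ means $x\preceq y$ and $x\neq y$. For a set $A$ (subset of $\Pi$, $\Pi'$ or $\Pi''$), $\mu(A):=\{x\in A:\neg\exists x'\in A.\,x'\prec x\}$. $\preceq$ is smooth iff for every such $A$ and every $x\in A-\mu(A)$ there is $x'\in\mu(A)$ with $x'\prec x$. *)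

theory Defs
  imports "HOL-Library.FuncSet"
begin

text \<open>Elements of a product \<open>\<Pi>Y\<close> are extensional functions (PiE Y V).
  Restriction of an element is restrict; of a set, the image.\<close>

definition restr :: "('i \<Rightarrow> 'v) set \<Rightarrow> 'i set \<Rightarrow> ('i \<Rightarrow> 'v) set" where
  "restr S Y = (\<lambda>s. restrict s Y) ` S"

definition concat :: "'i set \<Rightarrow> ('i \<Rightarrow> 'v) \<Rightarrow> ('i \<Rightarrow> 'v) \<Rightarrow> ('i \<Rightarrow> 'v)" where
  "concat X' s1 s2 = (\<lambda>i. if i \<in> X' then s1 i else s2 i)"

definition prodset :: "'i set \<Rightarrow> ('i \<Rightarrow> 'v) set \<Rightarrow> ('i \<Rightarrow> 'v) set \<Rightarrow> ('i \<Rightarrow> 'v) set" where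
  "prodset X' A B = {concat X' a b | a b. a \<in> A \<and> b \<in> B}"

definition strict :: "('a \<Rightarrow> 'a \<Rightarrow> bool) \<Rightarrow> 'a \<Rightarrow> 'a \<Rightarrow> bool" where
  "strict le x y \<longleftrightarrow> le x y \<and> x \<noteq> y"

definition mu :: "('a \<Rightarrow> 'a \<Rightarrow> bool) \<Rightarrow> 'a set \<Rightarrow> 'a set" where
  "mu le A = {x \<in> A. \<not> (\<exists>x'\<in>A. strict le x' x)}"

definition hamming_rel :: "('i \<Rightarrow> 'v set) \<Rightarrow> 'i set \<Rightarrow> 'i set \<Rightarrow> 'i set
    \<Rightarrow> (('i \<Rightarrow> 'v) \<Rightarrow> ('i \<Rightarrow> 'v) \<Rightarrow> bool) \<Rightarrow> bool" where
  "hamming_rel V X X' X'' le \<longleftrightarrow>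
     (\<forall>x \<in> PiE X V \<union> PiE X' V \<union> PiE X'' V. le x x) \<and>
     (\<forall>\<sigma>\<in>PiE X V. \<forall>\<tau>\<in>PiE X V.
        le \<sigma> \<tau> \<longleftrightarrow> (le (restrict \<sigma> X') (restrict \<tau> X') \<and> le (restrict \<sigma> X'') (restrict \<tau> X'')))"

definition smooth :: "('i \<Rightarrow> 'v set) \<Rightarrow> 'i set \<Rightarrow> 'i set \<Rightarrow> 'i set
    \<Rightarrow> (('i \<Rightarrow> 'v) \<Rightarrow> ('i \<Rightarrow> 'v) \<Rightarrow> bool) \<Rightarrow> bool" where
  "smooth V X X' X'' le \<longleftrightarrow>
     (\<forall>A. (A \<subseteq> PiE X V \<or> A \<subseteq> PiE X' V \<or> A \<subseteq> PiE X'' V) \<longrightarrow>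
        (\<forall>x \<in> A - mu le A. \<exists>x' \<in> mu le A. strict le x' x))"

definition big :: "('a \<Rightarrow> 'a \<Rightarrow> bool) \<Rightarrow> 'a set \<Rightarrow> 'a set \<Rightarrow> bool" where
  "big le A B \<longleftrightarrow> mu le A \<subseteq> B \<and> B \<subseteq> A"

end

theory Submission
  imports Defs
begin

lemma concat_PiE:
  assumes "a \<in> PiE X' V" "b \<in> PiE X'' V" "X' \<union> X'' = X"
  shows "concat X' a b \<in> PiE X V"
  using assms unfolding concat_def PiE_def Pi_def extensional_def by auto

lemma concat_r1:
  assumes "a \<in> PiE X' V"
  shows "restrict (concat X' a b) X' = a"
  using assms unfolding concat_def by (auto simp: restrict_def PiE_def extensional_def)

lemma concat_r2:
  assumes "b \<in> PiE X'' V" "X' \<inter> X'' = {}"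
  shows "restrict (concat X' a b) X'' = b"
  using assms unfolding concat_def by (auto simp: restrict_def PiE_def extensional_def fun_eq_iff)

theorem fact4p10:
  fixes X X' X'' :: "'i set" and V :: "'i \<Rightarrow> 'v set"
    and le :: "('i \<Rightarrow> 'v) \<Rightarrow> ('i \<Rightarrow> 'v) \<Rightarrow> bool"
  assumes disj: "X' \<inter> X'' = {}" and cover: "X' \<union> X'' = X"
    and dom: "\<forall>x y. le x y \<longrightarrow> (x, y) \<in> (PiE X V \<times> PiE X V) \<union> (PiE X' V \<times> PiE X' V) \<union> (PiE X'' V \<times> PiE X'' V)"
    and ham: "hamming_rel V X X' X'' le"
    and sm: "smooth V X X' X'' le"
  shows "(\<forall>S. S \<subseteq> PiE X V \<longrightarrow>
            restr (mu le (prodset X' (PiE X' V) (restr S X''))) X'' \<subseteq> restr (mu le S) X'')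
       \<and> (\<forall>A S. A \<subseteq> S \<longrightarrow> S \<subseteq> PiE X V \<longrightarrow> big le S A \<longrightarrow>
            (\<exists>B. big le (prodset X' (PiE X' V) (restr S X'')) B \<and> restr B X'' \<subseteq> restr A X''))"
proof -
  have refl: "\<And>x. x \<in> PiE X' V \<Longrightarrow> le x x" using ham unfolding hamming_rel_def by blast
  have hiff: "\<And>s t. s \<in> PiE X V \<Longrightarrow> t \<in> PiE X V \<Longrightarrow>
      le s t \<longleftrightarrow> (le (restrict s X') (restrict t X') \<and> le (restrict s X'') (restrict t X''))"
    using ham unfolding hamming_rel_def by blast
  have restrX: "\<And>s Y. s \<in> PiE X V \<Longrightarrow> Y \<subseteq> X \<Longrightarrow> restrict s Y \<in> PiE Y V"
    by (auto simp: PiE_def Pi_def)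
  have part1: "restr (mu le (prodset X' (PiE X' V) (restr S X''))) X'' \<subseteq> restr (mu le S) X''"
    if SP: "S \<subseteq> PiE X V" for S
  proof
    fix z assume "z \<in> restr (mu le (prodset X' (PiE X' V) (restr S X''))) X''"
    then obtain x where xm: "x \<in> mu le (prodset X' (PiE X' V) (restr S X''))" and z: "z = restrict x X''"
      unfolding restr_def by auto
    from xm obtain a s where a: "a \<in> PiE X' V" and s: "s \<in> S" and
      x: "x = concat X' a (restrict s X'')"
      unfolding mu_def prodset_def restr_def by auto
    define b where "b = restrict s X''"
    have bP: "b \<in> PiE X'' V" using restrX s SP cover b_def by blast
    have zb: "z = b" using z x b_def concat_r2[OF bP disj] by simp
    have xP: "x \<in> PiE X V" using x b_def concat_PiE[OF a bP cover] by simp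
    have minb: "c = b" if s2: "s2 \<in> S" and c: "c = restrict s2 X''" and lecb: "le c b" for s2 c
    proof (rule ccontr)
      assume ne: "c \<noteq> b"
      have cP: "c \<in> PiE X'' V" using restrX s2 SP cover c by blast
      define y where "y = concat X' a c"
      have yP: "y \<in> PiE X V" using concat_PiE[OF a cP cover] y_def by simp
      have yin: "y \<in> prodset X' (PiE X' V) (restr S X'')"
        unfolding prodset_def restr_def y_def using a s2 c by blast
      have "le y x" using hiff[OF yP xP] refl[OF a] lecb
        concat_r1[OF a] concat_r2[OF bP disj] concat_r2[OF cP disj] x y_def b_def by simp
      moreover have "y \<noteq> x" using concat_r2[OF bP disj] concat_r2[OF cP disj] x y_def b_def ne by metis
      ultimately show False using xm yin unfolding mu_def strict_def by blast
    qed
    show "z \<in> restr (mu le S) X''"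
    proof (cases "s \<in> mu le S")
      case True
      have "z = restrict s X''" using zb b_def by simp
      thus ?thesis unfolding restr_def using True by (rule image_eqI)
    next
      case False
      then obtain t where t: "t \<in> mu le S" and st: "strict le t s"
      proof -
        have "\<forall>x \<in> S - mu le S. \<exists>x' \<in> mu le S. strict le x' x"
          using sm SP unfolding smooth_def by blast
        thus ?thesis using that False s by blast
      qed
      have tS: "t \<in> S" using t unfolding mu_def by blast
      have tP: "t \<in> PiE X V" "s \<in> PiE X V" using tS s SP by auto
      have "le t s" using st unfolding strict_def by simp
      hence "le (restrict t X'') b" using hiff[OF tP] b_def by simp
      hence "restrict t X'' = b" using minb[OF tS HOL.refl] by simp
      hence "z = restrict t X''" using zb by simp
      thus ?thesis unfolding restr_def using t by (rule image_eqI)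
    qed
  qed
  show ?thesis
  proof (intro conjI allI impI)
    fix S assume "S \<subseteq> PiE X V" thus "restr (mu le (prodset X' (PiE X' V) (restr S X''))) X'' \<subseteq> restr (mu le S) X''"
      by (rule part1)
  next
    fix A S assume AS: "A \<subseteq> S" and SP: "S \<subseteq> PiE X V" and bg: "big le S A"
    let ?B = "mu le (prodset X' (PiE X' V) (restr S X''))"
    have "big le (prodset X' (PiE X' V) (restr S X'')) ?B" unfolding big_def mu_def by auto
    moreover have "restr ?B X'' \<subseteq> restr A X''"
      using part1[OF SP] bg unfolding big_def restr_def by blast
    ultimately show "\<exists>B. big le (prodset X' (PiE X' V) (restr S X'')) B \<and> restr B X'' \<subseteq> restr A X''" by blast
  qed
qed

end
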